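(* Let $\delta>0$ and $E\in\mathcal T_\delta$. Then there are constants $0<C_1<C_2$ such that for all $0<\epsilon<\delta$, $$\frac{C_1}{|m^+(E+i\epsilon)|}<\frac{\|\boldsymbol u_1\|_{L_\epsilon}}{\|\boldsymbol u_2\|_{L_\epsilon}}<\frac{C_2}{|m^+(E+i\epsilon)|}.$$
   Context: $J=\begin{pmatrix}1&0\\0&0\end{pmatrix}$, $V:\mathbb Z\to M(2,\mathbb C)$ bounded with self-adjoint values $V(n)=(V_{ij}(n))$, and $(\mathcal S\boldsymbol u)(n)=J\boldsymbol u(n+1)+J\boldsymbol u(n-1)+V(n)\boldsymbol u(n)$ on $\ell^2(\mathbb Z,\mathbb C^2)$; write $\boldsymbol u(n)=(a(n),b(n))^{\mathsf T}$. $\mathcal T_\delta=\{x\in\mathbb R:\operatorname{dist}(x,\{V_{22}(n):n\in\mathbb Z\})\ge\delta\}$. For $\operatorname{Im}z>0$ let $\boldsymbol u_z^+$ be the (unique up to scaling) nonzero solution of $\mathcal S\boldsymbol u=z\boldsymbol u$ with $\sum_{n\ge0}\|\boldsymbol u_z^+(n)\|^2<\infty$ and put $m^+(z)=-a_z^+(1)/a_z^+(0)$. For $E\in\mathcal T_\delta$, let $\boldsymbol u_1,\boldsymbol u_2$ be the solutions of $\mathcal S\boldsymbol u=E\boldsymbol u$ with $a_1(1)=1,a_1(0)=0$, $a_2(1)=0,a_2(0)=1$ (for such $E$ every solution satisfies $b(n)=\frac{V_{21}(n)}{E-V_{22}(n)}a(n)$). For $L>1$, $\|\boldsymbol u\|_L=\big(\sum_{n=1}^{\lfloor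 L\rfloor}\|\boldsymbol u(n)\|^2+(L-\lfloor L\rfloor)\|\boldsymbol u(\lfloor L\rfloor+1)\|^2\big)^{1/2}$, and for $\epsilon>0$, $L_\epsilon\in(1,\infty)$ is the unique $L$ with $\|\boldsymbol u_1\|_L\|\boldsymbol u_2\|_L=\frac1{4\epsilon}$. *)

theory Defs
  imports "HOL-Analysis.Analysis"
begin

text \<open>Vectors in C^2 are complex^2 (component 1 = a, component 2 = b);
  2x2 matrices are complex^2^2, entry V n $ i $ j = V_ij(n).\<close>

definition Jmat :: "complex^2^2" where
  "Jmat = (\<chi> i j. if i = 1 \<and> j = 1 then 1 else 0)"

definition self_adjoint_mat :: "complex^2^2 \<Rightarrow> bool" where
  "self_adjoint_mat M \<longleftrightarrow> (\<forall>i j. M $ i $ j = cnj (M $ j $ i))"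

definition Sop :: "(int \<Rightarrow> complex^2^2) \<Rightarrow> (int \<Rightarrow> complex^2) \<Rightarrow> int \<Rightarrow> complex^2" where
  "Sop V u n = Jmat *v u (n + 1) + Jmat *v u (n - 1) + V n *v u n"

definition solves :: "(int \<Rightarrow> complex^2^2) \<Rightarrow> complex \<Rightarrow> (int \<Rightarrow> complex^2) \<Rightarrow> bool" where
  "solves V z u \<longleftrightarrow> (\<forall>n. Sop V u n = z *s u n)"

definition Tdelta :: "(int \<Rightarrow> complex^2^2) \<Rightarrow> real \<Rightarrow> real set" where
  "Tdelta V \<delta> = {x. infdist (complex_of_real x) (range (\<lambda>n. V n $ 2 $ 2)) \<ge> \<delta>}"

definition uplus :: "(int \<Rightarrow> complex^2^2) \<Rightarrow> complex \<Rightarrow> (int \<Rightarrow> complex^2)" where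
  "uplus V z = (SOME u. solves V z u \<and> u \<noteq> (\<lambda>_. 0) \<and>
                        summable (\<lambda>k::nat. (norm (u (int k)))\<^sup>2))"

definition mplus :: "(int \<Rightarrow> complex^2^2) \<Rightarrow> complex \<Rightarrow> complex" where
  "mplus V z = - (uplus V z 1 $ 1) / (uplus V z 0 $ 1)"

definition u1 :: "(int \<Rightarrow> complex^2^2) \<Rightarrow> real \<Rightarrow> (int \<Rightarrow> complex^2)" where
  "u1 V E = (SOME u. solves V (complex_of_real E) u \<and> u 1 $ 1 = 1 \<and> u 0 $ 1 = 0)"

definition u2 :: "(int \<Rightarrow> complex^2^2) \<Rightarrow> real \<Rightarrow> (int \<Rightarrow> complex^2)" where
  "u2 V E = (SOME u. solves V (complex_of_real E) u \<and> u 1 $ 1 = 0 \<and> u 0 $ 1 = 1)"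

definition normL :: "(int \<Rightarrow> complex^2) \<Rightarrow> real \<Rightarrow> real" where
  "normL u L = sqrt ((\<Sum>n = 1..nat \<lfloor>L\<rfloor>. (norm (u (int n)))\<^sup>2)
                     + (L - of_int \<lfloor>L\<rfloor>) * (norm (u (\<lfloor>L\<rfloor> + 1)))\<^sup>2)"

definition Leps :: "(int \<Rightarrow> complex^2^2) \<Rightarrow> real \<Rightarrow> real \<Rightarrow> real" where
  "Leps V E \<epsilon> = (THE L. L > 1 \<and> normL (u1 V E) L * normL (u2 V E) L = 1 / (4 * \<epsilon>))"

end

theory Submission imports Defs begin

lemma vec2_eq: "(x::'a^2) = y \<longleftrightarrow> x$1 = y$1 \<and> x$2 = y$2"
  by (simp add: vec_eq_iff forall_2)

lemma mv2: fixes M :: "'a::semiring_1^2^2" shows "(M *v x)$1 = M$1$1*x$1 + M$1$2*x$2" "(M *v x)$2 = M$2$1*x$1 + M$2$2*x$2"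
  by (simp_all add: matrix_vector_mult_def sum_2)

lemma Jmat_comp: "Jmat$1$1 = 1" "Jmat$1$2 = 0" "Jmat$2$1 = 0" "Jmat$2$2 = 0"
  by (simp_all add: Jmat_def)

lemma norm2: "(norm (x::complex^2))\<^sup>2 = (cmod (x$1))\<^sup>2 + (cmod (x$2))\<^sup>2"
  by (simp add: norm_vec_def L2_set_def sum_2)

lemma solves_comp: "solves V z u \<longleftrightarrow> (\<forall>n. u(n+1)$1 + u(n-1)$1 + V n$1$1 * u n$1 + V n$1$2 * u n$2 = z * u n$1
   \<and> V n$2$1 * u n$1 + V n$2$2 * u n$2 = z * u n$2)"
  unfolding solves_def Sop_def vec2_eq by (simp add: mv2 Jmat_comp add.assoc)

definition clamp :: "real \<Rightarrow> real" where "clamp t = max 0 (min 1 t)"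
definition wt :: "real \<Rightarrow> nat \<Rightarrow> real" where "wt L n = clamp (L - real n + 1)"

lemma wt_nonneg: "0 \<le> wt L n" unfolding wt_def clamp_def by simp
lemma wt_le1: "wt L n \<le> 1" unfolding wt_def clamp_def by simp
lemma wt_mono: "L \<le> L' \<Longrightarrow> wt L n \<le> wt L' n" unfolding wt_def clamp_def by simp

lemma normL_sum:
  assumes "L \<ge> 1" "nat \<lfloor>L\<rfloor> + 1 \<le> M"
  shows "normL u L = sqrt (\<Sum>n=1..M. wt L n * (norm (u (int n)))\<^sup>2)"
proof -
  define K where "K = nat \<lfloor>L\<rfloor>"
  have fK: "\<lfloor>L\<rfloor> = int K" unfolding K_def using assms(1) by simp
  have KL: "real K \<le> L" "L < real K + 1" using fK by linarith+
  have w1: "wt L n = 1" if "n \<le> K" for n unfolding wt_def clamp_def using that KL by simp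
  have wK: "wt L (Suc K) = L - real K" unfolding wt_def clamp_def using KL by simp
  have w0: "wt L n = 0" if "n \<ge> K + 2" for n unfolding wt_def clamp_def using that KL by simp
  define T where "T = (\<Sum>n=1..K. (norm (u (int n)))\<^sup>2) + (L - real K) * (norm (u (int K + 1)))\<^sup>2"
  have base: "(\<Sum>n=1..Suc K. wt L n * (norm (u (int n)))\<^sup>2) = T"
  proof -
    have "(\<Sum>n=1..Suc K. wt L n * (norm (u (int n)))\<^sup>2) = (\<Sum>n=1..K. wt L n * (norm (u (int n)))\<^sup>2) + wt L (Suc K) * (norm (u (int (Suc K))))\<^sup>2"
      by simp
    also have "(\<Sum>n=1..K. wt L n * (norm (u (int n)))\<^sup>2) = (\<Sum>n=1..K. (norm (u (int n)))\<^sup>2)"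
      by (rule sum.cong) (auto simp: w1)
    finally show ?thesis unfolding T_def wK by (simp add: add.commute)
  qed
  have ind: "(\<Sum>n=1..Suc K + j. wt L n * (norm (u (int n)))\<^sup>2) = T" for j
  proof (induction j)
    case 0 then show ?case using base by simp
  next
    case (Suc j)
    have "(\<Sum>n=1..Suc K + Suc j. wt L n * (norm (u (int n)))\<^sup>2) = (\<Sum>n=1..Suc K + j. wt L n * (norm (u (int n)))\<^sup>2) + wt L (Suc K + Suc j) * (norm (u (int (Suc K + Suc j))))\<^sup>2"
      by simp
    then show ?case using Suc w0[of "Suc K + Suc j"] by simp
  qed
  obtain j where "M = Suc K + j" using assms(2) unfolding K_def by (metis Suc_eq_plus1 le_Suc_ex)
  then have "(\<Sum>n=1..M. wt L n * (norm (u (int n)))\<^sup>2) = T" using ind by simp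
  moreover have "normL u L = sqrt T" unfolding normL_def T_def fK by simp
  ultimately show ?thesis by simp
qed

lemma normL_L2:
  assumes "L \<ge> 1" "nat \<lfloor>L\<rfloor> + 1 \<le> M"
  shows "normL u L = L2_set (\<lambda>n. sqrt (wt L n) * norm (u (int n))) {1..M}"
  unfolding normL_sum[OF assms] L2_set_def
  by (simp add: power_mult_distrib wt_nonneg)

lemma L2_set_subset: "finite B \<Longrightarrow> A \<subseteq> B \<Longrightarrow> L2_set f A \<le> L2_set f B"
  unfolding L2_set_def by (intro real_sqrt_le_mono sum_mono2) auto

lemma growth:
  fixes \<alpha> \<beta> :: "nat \<Rightarrow> complex" and X Y :: "nat \<Rightarrow> real"
  assumes w: "\<And>n. \<alpha> (Suc n) * \<beta> n - \<alpha> n * \<beta> (Suc n) = 1"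
    and X: "\<And>n. cmod (\<alpha> n) \<le> X n" and Y: "\<And>n. cmod (\<beta> n) \<le> Y n" and M: "M \<ge> 1"
  shows "real M - 1 \<le> 2 * (L2_set X {1..M} * L2_set Y {1..M})"
proof -
  have X0: "0 \<le> X n" for n using X[of n] norm_ge_zero order_trans by blast
  have Y0: "0 \<le> Y n" for n using Y[of n] norm_ge_zero order_trans by blast
  have one: "1 \<le> X (Suc n) * Y n + X n * Y (Suc n)" for n
  proof -
    have "1 = cmod (\<alpha> (Suc n) * \<beta> n - \<alpha> n * \<beta> (Suc n))" using w[of n] by simp
    also have "\<dots> \<le> cmod (\<alpha> (Suc n)) * cmod (\<beta> n) + cmod (\<alpha> n) * cmod (\<beta> (Suc n))"
      by (metis norm_mult norm_triangle_ineq4)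
    also have "\<dots> \<le> X (Suc n) * Y n + X n * Y (Suc n)"
      by (intro add_mono mult_mono X Y X0) auto
    finally show ?thesis .
  qed
  have "real M - 1 = (\<Sum>n\<in>{1..M-1}. 1)" using M by simp
  also have "\<dots> \<le> (\<Sum>n\<in>{1..M-1}. X (Suc n) * Y n + X n * Y (Suc n))"
    by (rule sum_mono) (rule one)
  also have "\<dots> = (\<Sum>n\<in>{1..M-1}. \<bar>X (Suc n)\<bar> * \<bar>Y n\<bar>) + (\<Sum>n\<in>{1..M-1}. \<bar>X n\<bar> * \<bar>Y (Suc n)\<bar>)"
    by (simp add: sum.distrib X0 Y0)
  also have "\<dots> \<le> L2_set (\<lambda>n. X (Suc n)) {1..M-1} * L2_set Y {1..M-1} + L2_set X {1..M-1} * L2_set (\<lambda>n. Y (Suc n)) {1..M-1}"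
    by (intro add_mono L2_set_mult_ineq)
  also have "\<dots> \<le> L2_set X {1..M} * L2_set Y {1..M} + L2_set X {1..M} * L2_set Y {1..M}"
  proof -
    have sh: "L2_set (\<lambda>n. f (Suc n)) {1..M-1} = L2_set f {2..M}" for f :: "nat \<Rightarrow> real"
    proof -
      have "L2_set f {Suc 1..Suc (M-1)} = L2_set (\<lambda>n. f (Suc n)) {1..M-1}"
        unfolding L2_set_def by (simp only: sum.shift_bounds_cl_Suc_ivl)
      moreover have "{Suc 1..Suc (M-1)} = {2..M}" using M by auto
      ultimately show ?thesis by metis
    qed
    have s1: "L2_set f {2..M} \<le> L2_set f {1..M}" for f by (rule L2_set_subset) auto
    have s2: "L2_set f {1..M-1} \<le> L2_set f {1..M}" for f by (rule L2_set_subset) auto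
    show ?thesis unfolding sh
      by (intro add_mono mult_mono s1 s2 L2_set_nonneg)
  qed
  finally show ?thesis by simp
qed

lemma normL_nat: "M \<ge> 1 \<Longrightarrow> normL u (real M) = L2_set (\<lambda>n. norm (u (int n))) {1..M}"
  unfolding normL_def L2_set_def by simp

lemma voc:
  fixes \<alpha>1 \<alpha>2 \<phi> f T :: "nat \<Rightarrow> complex"
  assumes W: "\<And>k. \<alpha>1 (Suc k) * \<alpha>2 k - \<alpha>1 k * \<alpha>2 (Suc k) = 1"
    and r1: "\<And>k. \<alpha>1 (Suc (Suc k)) = T k * \<alpha>1 (Suc k) - \<alpha>1 k"
    and r2: "\<And>k. \<alpha>2 (Suc (Suc k)) = T k * \<alpha>2 (Suc k) - \<alpha>2 k"
    and r: "\<And>k. \<phi> (Suc (Suc k)) = T k * \<phi> (Suc k) - \<phi> k + f (Suc k)"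
    and i0: "\<phi> 0 = 1" and i1: "\<phi> 1 = - m"
    and a0: "\<alpha>1 0 = 0" "\<alpha>1 1 = 1" "\<alpha>2 0 = 1" "\<alpha>2 1 = 0"
  shows "\<phi> (Suc k) - (\<alpha>2 (Suc k) - m * \<alpha>1 (Suc k))
       = \<alpha>1 (Suc k) * (\<Sum>j=1..k. \<alpha>2 j * f j) - \<alpha>2 (Suc k) * (\<Sum>j=1..k. \<alpha>1 j * f j)"
proof -
  define C1 where "C1 k = \<phi> (Suc k) * \<alpha>2 k - \<phi> k * \<alpha>2 (Suc k)" for k
  define C2 where "C2 k = \<phi> k * \<alpha>1 (Suc k) - \<phi> (Suc k) * \<alpha>1 k" for k
  have c1: "C1 k = - m + (\<Sum>j=1..k. \<alpha>2 j * f j)" for k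
  proof (induction k)
    case 0
    show ?case unfolding C1_def using i0 i1 a0 by simp
  next
    case (Suc k)
    have "C1 (Suc k) = C1 k + \<alpha>2 (Suc k) * f (Suc k)"
      unfolding C1_def r r2 by (simp add: algebra_simps)
    then show ?case using Suc by simp
  qed
  have c2: "C2 k = 1 - (\<Sum>j=1..k. \<alpha>1 j * f j)" for k
  proof (induction k)
    case 0
    then show ?case unfolding C2_def using i0 i1 a0 by (simp add: algebra_simps)
  next
    case (Suc k)
    have "C2 (Suc k) = C2 k - \<alpha>1 (Suc k) * f (Suc k)"
      unfolding C2_def r r1 by (simp add: algebra_simps)
    then show ?case using Suc by simp
  qed
  have "\<phi> (Suc k) = C2 k * \<alpha>2 (Suc k) + C1 k * \<alpha>1 (Suc k)"
  proof -
    have "C2 k * \<alpha>2 (Suc k) + C1 k * \<alpha>1 (Suc k) = \<phi> (Suc k) * (\<alpha>1 (Suc k) * \<alpha>2 k - \<alpha>1 k * \<alpha>2 (Suc k))"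
      unfolding C1_def C2_def by (simp add: algebra_simps)
    then show ?thesis using W[of k] by simp
  qed
  then show ?thesis unfolding c1 c2 by (simp add: algebra_simps)
qed

lemma final_alg:
  fixes A B mm :: real
  assumes A: "A > 0" and B: "B > 0" and mm: "mm \<ge> 0"
    and ineq: "\<bar>B - mm * A\<bar> \<le> 6 * sqrt (mm * A * B)"
  shows "mm > 0 \<and> (1/64) / mm < A / B \<and> A / B < 64 / mm"
proof -
  define x where "x = mm * A"
  define s where "s = sqrt (x * B)"
  have x0: "x \<ge> 0" unfolding x_def using A mm by simp
  have s0: "s \<ge> 0" unfolding s_def using x0 B by simp
  have ss: "s\<^sup>2 = x * B" unfolding s_def using x0 B by simp
  have i: "\<bar>B - x\<bar> \<le> 6 * s" using ineq unfolding x_def s_def by (simp add: mult.assoc)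
  have up: "x < 64 * B"
  proof (rule ccontr)
    assume "\<not> x < 64 * B"
    then have h: "x \<ge> 64 * B" by simp
    have "x * B \<le> x * (x / 64)" using h x0 by (intro mult_left_mono) auto
    moreover have "(x / 8)\<^sup>2 = x * (x / 64)" by (simp add: power2_eq_square)
    ultimately have "s\<^sup>2 \<le> (x / 8)\<^sup>2" using ss by linarith
    then have "s \<le> x / 8" by (rule power2_le_imp_le) (use x0 in simp)
    then show False using i h B by linarith
  qed
  have lo: "x > B / 64"
  proof (rule ccontr)
    assume "\<not> x > B / 64"
    then have h: "x \<le> B / 64" by simp
    have "x * B \<le> (B / 64) * B" using h B by (intro mult_right_mono) auto
    moreover have "(B / 8)\<^sup>2 = (B / 64) * B" by (simp add: power2_eq_square)
    ultimately have "s\<^sup>2 \<le> (B / 8)\<^sup>2" using ss by linarith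
    then have "s \<le> B / 8" by (rule power2_le_imp_le) (use B in simp)
    then show False using i h B by linarith
  qed
  have "mm \<noteq> 0" using lo B unfolding x_def by auto
  then have mp: "mm > 0" using mm by simp
  have "(1/64) / mm < A / B" using lo mp A B unfolding x_def by (simp add: field_simps)
  moreover have "A / B < 64 / mm" using up mp A B unfolding x_def by (simp add: field_simps)
  ultimately show ?thesis using mp by simp
qed

lemma norm_smult2: "norm (c *s (x::complex^2)) = cmod c * norm x"
proof -
  have "(norm (c *s x))\<^sup>2 = (cmod c)\<^sup>2 * ((cmod (x$1))\<^sup>2 + (cmod (x$2))\<^sup>2)"
    unfolding norm2 by (simp add: norm_mult power_mult_distrib algebra_simps)
  also have "\<dots> = (cmod c * norm x)\<^sup>2" unfolding power_mult_distrib norm2 ..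
  finally show ?thesis by (simp add: power2_eq_iff_nonneg)
qed

lemma L2_set_le_sum_sq: "(\<And>i. i \<in> A \<Longrightarrow> 0 \<le> f i) \<Longrightarrow> (\<Sum>i\<in>A. (f i)\<^sup>2) \<le> c \<Longrightarrow> L2_set f A \<le> sqrt c"
  unfolding L2_set_def by (rule real_sqrt_le_mono)

lemma L2_set_triangle3: "L2_set (\<lambda>i. f i + g i + h i) A \<le> L2_set f A + L2_set g A + L2_set h A"
  using L2_set_triangle_ineq[of "\<lambda>i. f i + g i" h A] L2_set_triangle_ineq[of f g A] by linarith

locale SA = fixes V :: "int \<Rightarrow> complex^2^2" assumes sa: "\<And>n. self_adjoint_mat (V n)"
begin

lemma V11_real: "cnj (V n$1$1) = V n$1$1" using sa[of n] unfolding self_adjoint_mat_def by metis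
lemma V22_real: "cnj (V n$2$2) = V n$2$2" using sa[of n] unfolding self_adjoint_mat_def by metis
lemma V12: "V n$1$2 = cnj (V n$2$1)" using sa[of n] unfolding self_adjoint_mat_def by metis
lemma V22_of_real: "V n$2$2 = of_real (Re (V n$2$2))"
  using V22_real[of n] by (metis Reals_cnj_iff complex_is_Real_iff of_real_Re)
lemma V12V21: "V n$1$2 * V n$2$1 = of_real ((cmod (V n$2$1))\<^sup>2)"
  by (simp add: V12 complex_norm_square[symmetric] mult.commute)

lemma green_step:
  assumes "solves V z u"
  shows "Im (u(n+1)$1 * cnj (u n$1)) - Im (u n$1 * cnj (u(n-1)$1)) = Im z * (norm (u n))\<^sup>2"
proof -
  define a where "a = u n$1" define b where "b = u n$2"
  define ap where "ap = u(n+1)$1" define am where "am = u(n-1)$1"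
  have e1: "ap + am + V n$1$1 * a + V n$1$2 * b = z * a"
   and e2: "V n$2$1 * a + V n$2$2 * b = z * b"
    using assms unfolding solves_comp a_def b_def ap_def am_def by auto
  define Q where "Q = V n$1$1 * a * cnj a + V n$1$2 * b * cnj a + V n$2$1 * a * cnj b + V n$2$2 * b * cnj b"
  have sum: "ap * cnj a + am * cnj a + Q = z * (a * cnj a + b * cnj b)"
  proof -
    have "(ap + am + V n$1$1 * a + V n$1$2 * b) * cnj a + (V n$2$1 * a + V n$2$2 * b) * cnj b
        = z * a * cnj a + z * b * cnj b" using e1 e2 by simp
    then show ?thesis unfolding Q_def by (simp add: algebra_simps)
  qed
  have "cnj Q = Q" unfolding Q_def using V11_real[of n] V22_real[of n] V12[of n]
    by (simp add: algebra_simps)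
  then have ImQ: "Im Q = 0" by (metis Reals_cnj_iff complex_is_Real_iff)
  define N where "N = (norm (u n))\<^sup>2"
  have nf: "a * cnj a + b * cnj b = of_real N"
    unfolding N_def norm2 a_def b_def of_real_add complex_norm_square ..
  have s: "ap * cnj a + am * cnj a + Q = z * of_real N" using sum nf by simp
  have "Im (ap * cnj a) + Im (am * cnj a) = Im z * N" using arg_cong[OF s, of Im] ImQ by simp
  moreover have "Im (am * cnj a) = - Im (a * cnj am)" by simp
  ultimately show ?thesis unfolding a_def ap_def am_def N_def by (simp add: algebra_simps)
qed

lemma green_sum:
  assumes "solves V z u"
  shows "Im z * (\<Sum>n=1..N. (norm (u (int n)))\<^sup>2) = Im (u (int N + 1)$1 * cnj (u (int N)$1)) - Im (u 1$1 * cnj (u 0$1))"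
proof (induction N)
  case 0 then show ?case by simp
next
  case (Suc N)
  have "Im (u (int N + 1 + 1)$1 * cnj (u (int N + 1)$1)) - Im (u (int N + 1)$1 * cnj (u (int N + 1 - 1)$1))
     = Im z * (norm (u (int N + 1)))\<^sup>2" by (rule green_step[OF assms])
  then show ?case using Suc by (simp add: algebra_simps)
qed

lemma b_formula: assumes "solves V z u" "z \<noteq> V n$2$2"
  shows "u n$2 = V n$2$1 * u n$1 / (z - V n$2$2)"
proof -
  have "V n$2$1 * u n$1 + V n$2$2 * u n$2 = z * u n$2" using assms(1) unfolding solves_comp by auto
  then have "u n$2 * (z - V n$2$2) = V n$2$1 * u n$1" by (simp add: algebra_simps)
  then show ?thesis using assms(2) by (simp add: field_simps)
qed

lemma norm_sol: assumes "solves V z u" "z \<noteq> V n$2$2"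
  shows "(norm (u n))\<^sup>2 = (cmod (u n$1))\<^sup>2 * (1 + (cmod (V n$2$1))\<^sup>2 / (cmod (z - V n$2$2))\<^sup>2)"
  using assms by (simp add: norm2 b_formula[OF assms] norm_mult norm_divide power_mult_distrib power_divide algebra_simps)

lemma a_rec: assumes "solves V z u" "z \<noteq> V n$2$2"
  shows "u (n+1)$1 + u (n-1)$1 + (V n$1$1 + V n$1$2 * V n$2$1 / (z - V n$2$2)) * u n$1 = z * u n$1"
proof -
  have "u(n+1)$1 + u(n-1)$1 + V n$1$1 * u n$1 + V n$1$2 * u n$2 = z * u n$1"
    using assms(1) unfolding solves_comp by auto
  then show ?thesis unfolding b_formula[OF assms] by (simp add: algebra_simps)
qed

lemma solves_lin: assumes "solves V z p" "solves V z q"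
  shows "solves V z (\<lambda>n. p n - m *s q n)"
  using assms unfolding solves_comp
  by (auto simp: algebra_simps) (metis (no_types, lifting) distrib_left mult.left_commute)+

lemma solves_scale: assumes "solves V z p"
  shows "solves V z (\<lambda>n. m *s p n)"
  using assms unfolding solves_comp
  by (auto simp: algebra_simps) (metis (no_types, lifting) distrib_left mult.left_commute)+

end

primrec fw :: "(int \<Rightarrow> complex) \<Rightarrow> complex \<Rightarrow> complex \<Rightarrow> nat \<Rightarrow> complex \<times> complex" where
  "fw W \<alpha> \<beta> 0 = (\<alpha>, \<beta>)"
| "fw W \<alpha> \<beta> (Suc k) = (snd (fw W \<alpha> \<beta> k), W (int k + 1) * snd (fw W \<alpha> \<beta> k) - fst (fw W \<alpha> \<beta> k))"

primrec bw :: "(int \<Rightarrow> complex) \<Rightarrow> complex \<Rightarrow> complex \<Rightarrow> nat \<Rightarrow> complex \<times> complex" where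
  "bw W \<alpha> \<beta> 0 = (\<alpha>, \<beta>)"
| "bw W \<alpha> \<beta> (Suc k) = (W (- int k) * fst (bw W \<alpha> \<beta> k) - snd (bw W \<alpha> \<beta> k), fst (bw W \<alpha> \<beta> k))"

lemma seq_exists: "\<exists>a::int\<Rightarrow>complex. a 0 = \<alpha> \<and> a 1 = \<beta> \<and> (\<forall>n. a (n+1) = W n * a n - a (n-1))"
proof -
  define a where "a n = (if n \<ge> 0 then fst (fw W \<alpha> \<beta> (nat n)) else fst (bw W \<alpha> \<beta> (nat (-n))))" for n
  have ap: "a (int k) = fst (fw W \<alpha> \<beta> k)" for k unfolding a_def by simp
  have am: "a (- int k) = fst (bw W \<alpha> \<beta> k)" for k by (cases "k = 0") (auto simp: a_def)
  have "a (n+1) = W n * a n - a (n-1)" for n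
  proof (cases "n \<ge> 1")
    case True
    define k where "k = nat (n - 1)"
    have k: "n = int k + 1" using True unfolding k_def by simp
    have e: "n+1 = int (Suc (Suc k))" using k by simp
    have "a (n+1) = fst (fw W \<alpha> \<beta> (Suc (Suc k)))" unfolding e by (rule ap)
    moreover have "a n = fst (fw W \<alpha> \<beta> (Suc k))"
    proof -
      have e2: "int (Suc k) = n" using k by simp
      show ?thesis using ap[of "Suc k"] unfolding e2 .
    qed
    moreover have "a (n-1) = fst (fw W \<alpha> \<beta> k)" using ap[of k] k by simp
    moreover have "W (int k + 1) = W n" using k by simp
    ultimately show ?thesis by simp
  next
    case False
    show ?thesis
    proof (cases "n = 0")
      case True
      have "a (-1) = fst (bw W \<alpha> \<beta> 1)" using am[of 1] by simp
      then show ?thesis using True ap[of 0] ap[of 1] by simp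
    next
      case False
      define k where "k = nat (- n - 1)"
      have k: "n = - int k - 1" using False \<open>\<not> n \<ge> 1\<close> unfolding k_def by simp
      have e1: "n - 1 = - int (Suc (Suc k))" using k by simp
      have e2: "n = - int (Suc k)" using k by simp
      have e3: "n + 1 = - int k" using k by simp
      have "a (n-1) = fst (bw W \<alpha> \<beta> (Suc (Suc k)))" unfolding e1 by (rule am)
      moreover have "a n = fst (bw W \<alpha> \<beta> (Suc k))" unfolding e2 by (rule am)
      moreover have "a (n+1) = fst (bw W \<alpha> \<beta> k)" unfolding e3 by (rule am)
      moreover have "W (- int k - 1) = W n" using k by simp
      ultimately show ?thesis by (simp add: e2)
    qed
  qed
  moreover have "a 0 = \<alpha>" "a 1 = \<beta>" using ap[of 0] ap[of 1] by auto
  ultimately show ?thesis by blast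
qed

lemma seq_zero: fixes a :: "int \<Rightarrow> complex" assumes "a 0 = 0" "a 1 = 0" "\<And>n. a (n+1) = (W n :: complex) * a n - a (n-1)"
  shows "a n = 0"
proof -
  have p: "a (int k) = 0 \<and> a (int k + 1) = 0" for k
  proof (induction k)
    case 0 then show ?case using assms by simp
  next
    case (Suc k) then show ?case using assms(3)[of "int k + 1"] by (simp add: add.commute)
  qed
  have m: "a (- int k) = 0 \<and> a (- int k + 1) = 0" for k
  proof (induction k)
    case 0 then show ?case using assms by simp
  next
    case (Suc k)
    have h: "a (- int k - 1) = 0" using Suc assms(3)[of "- int k"] by (simp add: algebra_simps)
    have e: "- int (Suc k) = - int k - 1" by simp
    show ?case by (simp only: e diff_add_cancel h Suc.IH simp_thms)
  qed
  show ?thesis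
  proof (cases "n \<ge> 0")
    case True then show ?thesis using p[of "nat n"] by simp
  next
    case False then show ?thesis using m[of "nat (-n)"] by simp
  qed
qed

context SA begin

lemma sol_exists: assumes "\<And>n. z \<noteq> V n$2$2"
  shows "\<exists>u. solves V z u \<and> u 0$1 = \<alpha> \<and> u 1$1 = \<beta>"
proof -
  define W where "W n = z - (V n$1$1 + V n$1$2 * V n$2$1 / (z - V n$2$2))" for n
  obtain a where a: "a 0 = \<alpha>" "a 1 = \<beta>" "\<And>n. a (n+1) = W n * a n - a (n-1)"
    using seq_exists[of \<alpha> \<beta> W] by blast
  define u where "u n = (vector [a n, V n$2$1 * a n / (z - V n$2$2)] :: complex^2)" for n
  have uc: "u n$1 = a n" "u n$2 = V n$2$1 * a n / (z - V n$2$2)" for n unfolding u_def by simp_all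
  have "solves V z u" unfolding solves_comp
  proof (intro allI conjI)
    fix n
    have zn: "z - V n$2$2 \<noteq> 0" using assms[of n] by simp
    show "u (n + 1) $ 1 + u (n - 1) $ 1 + V n $ 1 $ 1 * u n $ 1 + V n $ 1 $ 2 * u n $ 2 = z * u n $ 1"
      using a(3)[of n] zn unfolding W_def uc by (simp add: field_simps)
    show "V n $ 2 $ 1 * u n $ 1 + V n $ 2 $ 2 * u n $ 2 = z * u n $ 2"
      using zn unfolding uc by (simp add: field_simps)
  qed
  then show ?thesis using a uc by auto
qed

lemma sol_zero: assumes "\<And>n. z \<noteq> V n$2$2" "solves V z u" "u 0$1 = 0" "u 1$1 = 0"
  shows "u n = 0"
proof -
  define W where "W n = z - (V n$1$1 + V n$1$2 * V n$2$1 / (z - V n$2$2))" for n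
  have "(\<lambda>n. u n$1) n = 0" for n
  proof (rule seq_zero[where W=W])
    show "u (n + 1) $ 1 = W n * u n $ 1 - u (n - 1) $ 1" for n
      using a_rec[OF assms(2) assms(1)[of n]] unfolding W_def by (simp add: algebra_simps)
  qed (use assms in auto)
  then show ?thesis using b_formula[OF assms(2) assms(1)[of n]] by (simp add: vec2_eq)
qed

lemma nz_of_Im: assumes "Im z \<noteq> 0" shows "z \<noteq> V n$2$2"
  using assms V22_of_real[of n] by (metis Im_complex_of_real)

lemma a_tendsto: assumes "summable (\<lambda>k::nat. (norm (u (int k) :: complex^2))\<^sup>2)"
  shows "(\<lambda>N. u (int N)$1) \<longlonglongrightarrow> 0"
proof -
  have "(\<lambda>k. (norm (u (int k)))\<^sup>2) \<longlonglongrightarrow> 0" using summable_LIMSEQ_zero[OF assms] .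
  then have "(\<lambda>k. sqrt ((norm (u (int k)))\<^sup>2)) \<longlonglongrightarrow> sqrt 0" by (rule tendsto_real_sqrt)
  then have t: "(\<lambda>k. norm (u (int k))) \<longlonglongrightarrow> 0" by simp
  show ?thesis
    by (rule Lim_null_comparison[OF _ t]) (intro always_eventually allI Finite_Cartesian_Product.norm_nth_le)
qed

lemma h_tendsto: assumes "summable (\<lambda>k::nat. (norm (u (int k) :: complex^2))\<^sup>2)"
  shows "(\<lambda>N. Im (u (int N + 1)$1 * cnj (u (int N)$1))) \<longlonglongrightarrow> 0"
proof -
  have t: "(\<lambda>N. u (int N)$1) \<longlonglongrightarrow> 0" by (rule a_tendsto[OF assms])
  have t1: "(\<lambda>N. u (int N + 1)$1) \<longlonglongrightarrow> 0"
    using LIMSEQ_Suc[OF t] by (simp add: add.commute)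
  have "(\<lambda>N. u (int N + 1)$1 * cnj (u (int N)$1)) \<longlonglongrightarrow> 0 * cnj 0"
    by (intro tendsto_intros t t1)
  then have "(\<lambda>N. Im (u (int N + 1)$1 * cnj (u (int N)$1))) \<longlonglongrightarrow> Im (0 * cnj 0)"
    by (rule tendsto_Im)
  then show ?thesis by simp
qed

lemma green_bound: assumes "solves V z u" "Im z > 0" "summable (\<lambda>k::nat. (norm (u (int k)))\<^sup>2)"
  shows "Im z * (\<Sum>n=1..N. (norm (u (int n)))\<^sup>2) \<le> - Im (u 1$1 * cnj (u 0$1))"
proof -
  define h where "h M = Im (u (int M + 1)$1 * cnj (u (int M)$1)) - Im (u 1$1 * cnj (u 0$1))" for M
  have "h \<longlonglongrightarrow> 0 - Im (u 1$1 * cnj (u 0$1))"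
    unfolding h_def by (intro tendsto_intros h_tendsto[OF assms(3)])
  moreover have "\<exists>N0. \<forall>M\<ge>N0. Im z * (\<Sum>n=1..N. (norm (u (int n)))\<^sup>2) \<le> h M"
  proof (intro exI allI impI)
    fix M assume "N \<le> M"
    have "(\<Sum>n=1..N. (norm (u (int n)))\<^sup>2) \<le> (\<Sum>n=1..M. (norm (u (int n)))\<^sup>2)"
      by (rule sum_mono2) (use \<open>N \<le> M\<close> in auto)
    then have "Im z * (\<Sum>n=1..N. (norm (u (int n)))\<^sup>2) \<le> Im z * (\<Sum>n=1..M. (norm (u (int n)))\<^sup>2)"
      using assms(2) by (simp add: mult_left_mono)
    also have "\<dots> = h M" unfolding h_def by (rule green_sum[OF assms(1)])
    finally show "Im z * (\<Sum>n=1..N. (norm (u (int n)))\<^sup>2) \<le> h M" .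
  qed
  ultimately show ?thesis by (metis LIMSEQ_le_const diff_0)
qed

lemma q_nonzero: assumes "solves V z q" "Im z > 0" "q 0$1 = 0" "q 1$1 = 1" "M \<ge> 1"
  shows "q (int M)$1 \<noteq> 0"
proof
  assume q0: "q (int M)$1 = 0"
  have "M \<noteq> 1" using q0 assms(4) by auto
  then have M2: "M \<ge> 2" using assms(5) by auto
  have "Im z * (\<Sum>n=1..M-1. (norm (q (int n)))\<^sup>2) = Im (q (int (M-1) + 1)$1 * cnj (q (int (M-1))$1)) - Im (q 1$1 * cnj (q 0$1))"
    by (rule green_sum[OF assms(1)])
  also have "int (M-1) + 1 = int M" using M2 by simp
  finally have "Im z * (\<Sum>n=1..M-1. (norm (q (int n)))\<^sup>2) = 0" using q0 assms(3) by simp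
  then have s0: "(\<Sum>n=1..M-1. (norm (q (int n)))\<^sup>2) = 0" using assms(2) by simp
  have "(norm (q 1))\<^sup>2 \<le> (\<Sum>n=1..M-1. (norm (q (int n)))\<^sup>2)"
    using member_le_sum[of 1 "{1..M-1}" "\<lambda>n. (norm (q (int n)))\<^sup>2"] M2 by auto
  moreover have "1 \<le> norm (q 1)" using Finite_Cartesian_Product.norm_nth_le[of "q 1" 1] assms(4) by simp
  ultimately show False using s0 by (smt (verit) one_le_power)
qed

lemma weyl: assumes "Im z > 0"
  shows "\<exists>u. solves V z u \<and> u \<noteq> (\<lambda>_. 0) \<and> summable (\<lambda>k::nat. (norm (u (int k)))\<^sup>2)"
proof -
  have nz: "\<And>n. z \<noteq> V n$2$2" using nz_of_Im assms by simp
  obtain p where p: "solves V z p" "p 0$1 = 1" "p 1$1 = 0" using sol_exists[OF nz] by blast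
  obtain q where q: "solves V z q" "q 0$1 = 0" "q 1$1 = 1" using sol_exists[OF nz] by blast
  define \<psi> where "\<psi> m = (\<lambda>n. p n - m *s q n)" for m
  have \<psi>s: "solves V z (\<psi> m)" for m unfolding \<psi>_def by (rule solves_lin[OF p(1) q(1)])
  have \<psi>1: "\<psi> m n$1 = p n$1 - m * q n$1" for m n unfolding \<psi>_def by simp
  define S where "S N m = (\<Sum>n=1..N. (norm (\<psi> m (int n)))\<^sup>2)" for N m
  define g where "g N m = Im (\<psi> m (int N + 1)$1 * cnj (\<psi> m (int N)$1))" for N m
  have gS: "g N m = Im z * S N m - Im m" for N m
    using green_sum[OF \<psi>s, of m N] unfolding g_def S_def \<psi>1 using p q by simp
  define D where "D N = {m. g (Suc N) m \<le> 0}" for N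
  have Dbound: "cmod m \<le> 1 / Im z" if "m \<in> D N" for m N
  proof -
    have "Im z * S (Suc N) m \<le> Im m" using that gS[of "Suc N" m] unfolding D_def by simp
    moreover have "(cmod m)\<^sup>2 \<le> S (Suc N) m"
    proof -
      have "(norm (\<psi> m 1))\<^sup>2 \<le> S (Suc N) m"
        unfolding S_def using member_le_sum[of 1 "{1..Suc N}" "\<lambda>n. (norm (\<psi> m (int n)))\<^sup>2"] by auto
      moreover have "cmod m \<le> norm (\<psi> m 1)" using Finite_Cartesian_Product.norm_nth_le[of "\<psi> m 1" 1] \<psi>1[of m 1] p q by simp
      ultimately show ?thesis by (smt (verit) norm_ge_zero power_mono)
    qed
    ultimately have "Im z * (cmod m)\<^sup>2 \<le> cmod m"
      using assms abs_Im_le_cmod[of m] by (smt (verit) mult_left_mono)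
    then show ?thesis using assms
      by (cases "m = 0") (auto simp: power2_eq_square field_simps)
  qed
  have Dclosed: "closed (D N)" for N
    unfolding D_def g_def \<psi>1 by (intro closed_Collect_le continuous_intros)
  have Dcompact: "compact (D N)" for N
    unfolding compact_eq_bounded_closed
    using Dclosed Dbound by (meson bounded_iff)
  have Dne: "D N \<noteq> {}" for N
  proof -
    have qn: "q (int (Suc N))$1 \<noteq> 0" by (rule q_nonzero[OF q(1) assms q(2) q(3)]) simp
    define m0 where "m0 = p (int (Suc N))$1 / q (int (Suc N))$1"
    have "\<psi> m0 (int (Suc N))$1 = 0" unfolding \<psi>1 m0_def using qn by simp
    then have "g (Suc N) m0 = 0" unfolding g_def by simp
    then have "m0 \<in> D N" unfolding D_def by simp
    then show ?thesis by auto
  qed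
  have Smono: "S N m \<le> S M m" if "N \<le> M" for N M m
    unfolding S_def by (rule sum_mono2) (use that in auto)
  have Dmono: "D N \<subseteq> D M" if "M \<le> N" for M N
  proof
    fix m assume "m \<in> D N"
    then have "Im z * S (Suc N) m - Im m \<le> 0" unfolding D_def gS by simp
    moreover have "Im z * S (Suc M) m \<le> Im z * S (Suc N) m"
      using Smono[of "Suc M" "Suc N" m] that assms by (simp add: mult_left_mono)
    ultimately show "m \<in> D M" unfolding D_def gS by simp
  qed
  have "\<Inter>(range D) \<noteq> {}" by (rule compact_nest[OF Dcompact Dne Dmono])
  then obtain m where m: "\<And>N. m \<in> D N" by blast
  have Sb: "S (Suc N) m \<le> Im m / Im z" for N
    using m[of N] gS[of "Suc N" m] assms unfolding D_def by (simp add: field_simps)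
  define f where "f k = (norm (\<psi> m (int k)))\<^sup>2" for k
  have "summable f"
  proof (rule summableI_nonneg_bounded)
    show "0 \<le> f n" for n unfolding f_def by simp
    fix n
    have "(\<Sum>i<n. f i) \<le> (\<Sum>i\<in>insert 0 {1..Suc n}. f i)"
      by (rule sum_mono2) (auto simp: f_def)
    also have "\<dots> = f 0 + S (Suc n) m" unfolding S_def f_def by simp
    also have "\<dots> \<le> f 0 + Im m / Im z" using Sb by simp
    finally show "(\<Sum>i<n. f i) \<le> f 0 + Im m / Im z" .
  qed
  moreover have "\<psi> m \<noteq> (\<lambda>_. 0)"
  proof
    assume "\<psi> m = (\<lambda>_. 0)"
    then have "\<psi> m 0$1 = 0" by simp
    then show False using \<psi>1[of m 0] p q by simp
  qed
  ultimately show ?thesis using \<psi>s unfolding f_def by blast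
qed

lemma uplus_props: assumes "Im z > 0"
  shows "solves V z (uplus V z) \<and> uplus V z \<noteq> (\<lambda>_. 0) \<and> summable (\<lambda>k::nat. (norm (uplus V z (int k)))\<^sup>2)"
  unfolding uplus_def by (rule someI_ex[OF weyl[OF assms]])

lemma uplus_a0: assumes "Im z > 0" shows "uplus V z 0$1 \<noteq> 0"
proof
  assume a0: "uplus V z 0$1 = 0"
  let ?u = "uplus V z"
  have props: "solves V z ?u" "?u \<noteq> (\<lambda>_. 0)" "summable (\<lambda>k::nat. (norm (?u (int k)))\<^sup>2)"
    using uplus_props[OF assms] by auto
  have "Im z * (\<Sum>n=1..1. (norm (?u (int n)))\<^sup>2) \<le> - Im (?u 1$1 * cnj (?u 0$1))"
    by (rule green_bound[OF props(1) assms props(3)])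
  then have "Im z * (norm (?u 1))\<^sup>2 \<le> 0" using a0 by simp
  then have "norm (?u 1) = 0" using assms
    by (smt (verit, best) mult_pos_pos norm_ge_zero power_less_zero_eq zero_less_power2)
  then have "?u 1$1 = 0" by simp
  moreover have nz: "\<And>n. z \<noteq> V n$2$2" using nz_of_Im assms by simp
  ultimately have "?u n = 0" for n using sol_zero[OF nz props(1) a0] by blast
  then show False using props(2) by auto
qed

definition Wc :: "complex \<Rightarrow> int \<Rightarrow> complex" where
  "Wc z n = V n$1$1 + V n$1$2 * V n$2$1 / (z - V n$2$2)"

lemma rec_nat: assumes "solves V z u" "\<And>n. z \<noteq> V n$2$2"
  shows "u (int (Suc (Suc k)))$1 = (z - Wc z (int (Suc k))) * u (int (Suc k))$1 - u (int k)$1"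
proof -
  have "u (int (Suc k) + 1)$1 + u (int (Suc k) - 1)$1 + Wc z (int (Suc k)) * u (int (Suc k))$1 = z * u (int (Suc k))$1"
    using a_rec[OF assms(1) assms(2)] unfolding Wc_def by blast
  moreover have "int (Suc k) + 1 = int (Suc (Suc k))" "int (Suc k) - 1 = int k" by simp_all
  ultimately show ?thesis by (simp add: algebra_simps)
qed

end

locale SAE = SA + fixes E \<delta> :: real
  assumes dpos: "0 < \<delta>" and gap: "\<And>n. \<delta> \<le> cmod (complex_of_real E - V n$2$2)"
begin

lemma nzE: "complex_of_real E \<noteq> V n$2$2" using gap[of n] dpos by auto

lemma u1_props: "solves V (complex_of_real E) (u1 V E) \<and> u1 V E 1$1 = 1 \<and> u1 V E 0$1 = 0"
proof -
  obtain u where "solves V (complex_of_real E) u" "u 0$1 = 0" "u 1$1 = 1" using sol_exists[OF nzE] by blast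
  then show ?thesis unfolding u1_def by (intro someI_ex[where P="\<lambda>u. solves V (complex_of_real E) u \<and> u 1$1 = 1 \<and> u 0$1 = 0"]) blast
qed

lemma u2_props: "solves V (complex_of_real E) (u2 V E) \<and> u2 V E 1$1 = 0 \<and> u2 V E 0$1 = 1"
proof -
  obtain u where "solves V (complex_of_real E) u" "u 0$1 = 1" "u 1$1 = 0" using sol_exists[OF nzE] by blast
  then show ?thesis unfolding u2_def by (intro someI_ex[where P="\<lambda>u. solves V (complex_of_real E) u \<and> u 1$1 = 0 \<and> u 0$1 = 1"]) blast
qed

lemma wronsk: "u1 V E (int (Suc k))$1 * u2 V E (int k)$1 - u1 V E (int k)$1 * u2 V E (int (Suc k))$1 = 1"
proof (induction k)
  case 0 then show ?case using u1_props u2_props by simp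
next
  case (Suc k)
  let ?c = "complex_of_real E - Wc (complex_of_real E) (int (Suc k))"
  have r1: "u1 V E (int (Suc (Suc k)))$1 = ?c * u1 V E (int (Suc k))$1 - u1 V E (int k)$1"
    using rec_nat u1_props nzE by blast
  have r2: "u2 V E (int (Suc (Suc k)))$1 = ?c * u2 V E (int (Suc k))$1 - u2 V E (int k)$1"
    using rec_nat u2_props nzE by blast
  show ?case unfolding r1 r2 using Suc.IH by (simp add: algebra_simps)
qed

lemma u2_at1: "u2 V E 1 = 0"
  using b_formula[OF conjunct1[OF u2_props] nzE, of 1] u2_props by (simp add: vec2_eq)

lemma a2_2: "u2 V E 2$1 = -1"
  using rec_nat[OF conjunct1[OF u2_props] nzE, of 0] u2_props by simp

lemma norm_u1_1: "1 \<le> norm (u1 V E 1)"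
  using Finite_Cartesian_Product.norm_nth_le[of "u1 V E 1" 1] u1_props by simp

lemma norm_u2_2: "1 \<le> norm (u2 V E 2)"
  using Finite_Cartesian_Product.norm_nth_le[of "u2 V E 2" 1] a2_2 by simp

lemma growthE: "M \<ge> 1 \<Longrightarrow> real M - 1 \<le> 2 * (normL (u1 V E) (real M) * normL (u2 V E) (real M))"
  unfolding normL_nat
  by (rule growth[where \<alpha>="\<lambda>n. u1 V E (int n)$1" and \<beta>="\<lambda>n. u2 V E (int n)$1"])
     (auto simp: Finite_Cartesian_Product.norm_nth_le wronsk[unfolded of_nat_Suc])


lemma normL_u2_1: "normL (u2 V E) 1 = 0"
  by (simp add: normL_def u2_at1)

lemma f_cont: "continuous_on {1..real M} (\<lambda>L. normL (u1 V E) L * normL (u2 V E) L)"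
proof -
  have c: "continuous_on {1..real M} (\<lambda>L. sqrt (\<Sum>n=1..M+1. wt L n * (norm (u1 V E (int n)))\<^sup>2) * sqrt (\<Sum>n=1..M+1. wt L n * (norm (u2 V E (int n)))\<^sup>2))"
    unfolding wt_def clamp_def by (intro continuous_intros)
  show ?thesis
  proof (rule continuous_on_eq[OF c])
    fix L assume L: "L \<in> {1..real M}"
    then have b: "nat \<lfloor>L\<rfloor> + 1 \<le> M + 1" by (simp add: nat_le_iff floor_le_iff)
    have L1: "1 \<le> L" using L by simp
    show "sqrt (\<Sum>n=1..M+1. wt L n * (norm (u1 V E (int n)))\<^sup>2) * sqrt (\<Sum>n=1..M+1. wt L n * (norm (u2 V E (int n)))\<^sup>2) = normL (u1 V E) L * normL (u2 V E) L"
      using normL_sum[OF L1 b] by simp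
  qed
qed

lemma f_strict: assumes "1 < L" "L < L'"
  shows "normL (u1 V E) L * normL (u2 V E) L < normL (u1 V E) L' * normL (u2 V E) L'"
proof -
  define M where "M = nat \<lfloor>L'\<rfloor> + 1"
  have fl: "\<lfloor>L\<rfloor> \<le> \<lfloor>L'\<rfloor>" using assms by (simp add: floor_mono)
  have hML: "nat \<lfloor>L\<rfloor> + 1 \<le> M" "nat \<lfloor>L'\<rfloor> + 1 \<le> M" unfolding M_def using fl by auto
  have M2: "2 \<le> M" unfolding M_def using assms by linarith
  define F where "F u l = (\<Sum>n=1..M. wt l n * (norm (u (int n) :: complex^2))\<^sup>2)" for u l
  have nL: "normL u l = sqrt (F u l)" if "l \<in> {L, L'}" for u l
  proof -
    from that have "l = L \<or> l = L'" by auto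
    then show ?thesis using normL_sum[of L M u] normL_sum[of L' M u] hML assms unfolding F_def by auto
  qed
  have Fmono: "F u L \<le> F u L'" for u
    unfolding F_def using assms by (intro sum_mono mult_right_mono wt_mono) auto
  have F1pos: "0 < F (u1 V E) L"
  proof -
    have "wt L 1 * (norm (u1 V E (int 1)))\<^sup>2 \<le> F (u1 V E) L"
      unfolding F_def using M2 by (intro member_le_sum) (auto intro: mult_nonneg_nonneg wt_nonneg)
    moreover have "wt L 1 = 1" unfolding wt_def clamp_def using assms by simp
    moreover have "1 \<le> (norm (u1 V E (int 1)))\<^sup>2" using norm_u1_1 by (simp add: one_le_power)
    ultimately show ?thesis by simp
  qed
  have F2pos: "0 < F (u2 V E) L"
  proof -
    have "wt L 2 * (norm (u2 V E (int 2)))\<^sup>2 \<le> F (u2 V E) L"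
      unfolding F_def using M2 by (intro member_le_sum) (auto intro: mult_nonneg_nonneg wt_nonneg)
    moreover have "wt L 2 > 0" unfolding wt_def clamp_def using assms by simp
    moreover have "1 \<le> (norm (u2 V E (int 2)))\<^sup>2" using norm_u2_2 by (simp add: one_le_power)
    ultimately show ?thesis by (smt (verit) mult_le_cancel_left1)
  qed
  define K where "K = nat \<lfloor>L\<rfloor>"
  have KM: "Suc K \<in> {1..M}" using hML unfolding K_def by auto
  have wK: "wt L (Suc K) < wt L' (Suc K)"
  proof -
    have fK: "\<lfloor>L\<rfloor> = int K" unfolding K_def using assms by simp
    then have "real K \<le> L" "L < real K + 1" by linarith+
    then show ?thesis unfolding wt_def clamp_def using assms by auto
  qed
  have strict: "F u L < F u L'" if "norm (u (int (Suc K))) > 0" for u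
    unfolding F_def
  proof (rule sum_strict_mono_ex1)
    show "\<forall>x\<in>{1..M}. wt L x * (norm (u (int x)))\<^sup>2 \<le> wt L' x * (norm (u (int x)))\<^sup>2"
      using assms by (auto intro!: mult_right_mono wt_mono)
    show "\<exists>a\<in>{1..M}. wt L a * (norm (u (int a)))\<^sup>2 < wt L' a * (norm (u (int a)))\<^sup>2"
      using KM wK that by (intro bexI[of _ "Suc K"]) auto
  qed simp
  have "u1 V E (int (Suc K))$1 \<noteq> 0 \<or> u2 V E (int (Suc K))$1 \<noteq> 0"
    using wronsk[of K] by auto
  then have "norm (u1 V E (int (Suc K))) > 0 \<or> norm (u2 V E (int (Suc K))) > 0"
    by auto
  then have "F (u1 V E) L * F (u2 V E) L < F (u1 V E) L' * F (u2 V E) L'"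
  proof
    assume "norm (u1 V E (int (Suc K))) > 0"
    then have "F (u1 V E) L < F (u1 V E) L'" by (rule strict)
    then show ?thesis using Fmono[of "u2 V E"] F1pos F2pos
      by (smt (verit) mult_strict_right_mono mult_left_mono)
  next
    assume "norm (u2 V E (int (Suc K))) > 0"
    then have "F (u2 V E) L < F (u2 V E) L'" by (rule strict)
    then show ?thesis using Fmono[of "u1 V E"] F1pos F2pos
      by (smt (verit) mult_strict_left_mono mult_right_mono)
  qed
  then have "sqrt (F (u1 V E) L * F (u2 V E) L) < sqrt (F (u1 V E) L' * F (u2 V E) L')"
    by (rule real_sqrt_less_mono)
  then show ?thesis using nL by (simp add: real_sqrt_mult)
qed

lemma Leps_ex1: assumes "y > 0" shows "\<exists>!L. L > 1 \<and> normL (u1 V E) L * normL (u2 V E) L = y"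
proof (rule ex_ex1I)
  define M where "M = nat \<lceil>2 * y\<rceil> + 2"
  have M1: "M \<ge> 1" unfolding M_def by simp
  have "real M - 1 \<le> 2 * (normL (u1 V E) (real M) * normL (u2 V E) (real M))" by (rule growthE[OF M1])
  moreover have "real M - 1 \<ge> 2 * y + 1" unfolding M_def using assms by linarith
  ultimately have fM: "y \<le> normL (u1 V E) (real M) * normL (u2 V E) (real M)" by linarith
  have f1: "normL (u1 V E) 1 * normL (u2 V E) 1 \<le> y" using normL_u2_1 assms by simp
  obtain L where L: "1 \<le> L" "L \<le> real M" "normL (u1 V E) L * normL (u2 V E) L = y"
    using IVT'[OF f1 fM _ f_cont] M1 by auto
  have "L \<noteq> 1" using L(3) normL_u2_1 assms by auto
  then have "L > 1" using L(1) by simp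
  then show "\<exists>L. L > 1 \<and> normL (u1 V E) L * normL (u2 V E) L = y" using L(3) by blast
next
  fix L L' assume a: "L > 1 \<and> normL (u1 V E) L * normL (u2 V E) L = y" "L' > 1 \<and> normL (u1 V E) L' * normL (u2 V E) L' = y"
  show "L = L'"
  proof (rule ccontr)
    assume "L \<noteq> L'"
    then have "L < L' \<or> L' < L" by auto
    then show False using f_strict a by (metis less_irrefl)
  qed
qed

lemma Leps_props: assumes "\<epsilon> > 0"
  shows "Leps V E \<epsilon> > 1 \<and> normL (u1 V E) (Leps V E \<epsilon>) * normL (u2 V E) (Leps V E \<epsilon>) = 1 / (4 * \<epsilon>)"
  unfolding Leps_def by (rule theI'[OF Leps_ex1]) (use assms in simp)

lemma weight_facts:
  assumes e0: "0 < \<epsilon>" and e\<delta>: "\<epsilon> < \<delta>"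
  shows "cmod (complex_of_real E - V n$2$2) \<le> cmod (Complex E \<epsilon> - V n$2$2)"
    and "(cmod (Complex E \<epsilon> - V n$2$2))\<^sup>2 \<le> 2 * (cmod (complex_of_real E - V n$2$2))\<^sup>2"
proof -
  define dR where "dR = Re (V n$2$2)"
  have d: "V n$2$2 = complex_of_real dR" unfolding dR_def by (rule V22_of_real)
  have c1: "cmod (complex_of_real E - V n$2$2) = \<bar>E - dR\<bar>" unfolding d
    by (simp flip: of_real_diff)
  have c2: "(cmod (Complex E \<epsilon> - V n$2$2))\<^sup>2 = (E - dR)\<^sup>2 + \<epsilon>\<^sup>2" unfolding d
    by (simp add: cmod_def)
  have g: "\<delta> \<le> \<bar>E - dR\<bar>" using gap[of n] c1 by simp
  show "cmod (complex_of_real E - V n$2$2) \<le> cmod (Complex E \<epsilon> - V n$2$2)"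
    unfolding d by (simp add: cmod_def)
  have "\<epsilon>\<^sup>2 \<le> (E - dR)\<^sup>2"
  proof -
    have "\<epsilon> \<le> \<bar>E - dR\<bar>" using e\<delta> g by simp
    then have "\<epsilon>\<^sup>2 \<le> \<bar>E - dR\<bar>\<^sup>2" using e0 by (intro power_mono) auto
    then show ?thesis by simp
  qed
  then show "(cmod (Complex E \<epsilon> - V n$2$2))\<^sup>2 \<le> 2 * (cmod (complex_of_real E - V n$2$2))\<^sup>2"
    unfolding c2 c1 by simp
qed

lemma g_bound:
  assumes e0: "0 < \<epsilon>" and e\<delta>: "\<epsilon> < \<delta>"
  shows "cmod ((Complex E \<epsilon> - Wc (Complex E \<epsilon>) n) - (complex_of_real E - Wc (complex_of_real E) n))
     \<le> \<epsilon> * (1 + (cmod (V n$2$1))\<^sup>2 / (cmod (complex_of_real E - V n$2$2))\<^sup>2)"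
proof -
  define z where "z = Complex E \<epsilon>"
  define x where "x = complex_of_real E"
  define d where "d = V n$2$2"
  define P where "P = V n$1$2 * V n$2$1"
  have zx: "z - x = \<i> * of_real \<epsilon>" unfolding z_def x_def by (simp add: complex_eq_iff)
  have dx: "cmod (x - d) \<ge> \<delta>" unfolding x_def d_def by (rule gap)
  then have xd0: "x - d \<noteq> 0" using dpos by auto
  have zd0: "z - d \<noteq> 0" using nz_of_Im[of z n] e0 unfolding z_def d_def by simp
  have le: "cmod (x - d) \<le> cmod (z - d)" using weight_facts(1)[OF e0 e\<delta>, of n] unfolding x_def z_def d_def .
  have "(z - Wc z n) - (x - Wc x n) = (z - x) - P * (1 / (z - d) - 1 / (x - d))"
    unfolding Wc_def P_def d_def by (simp add: algebra_simps)
  also have "1 / (z - d) - 1 / (x - d) = - (z - x) / ((z - d) * (x - d))"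
    using xd0 zd0 by (simp add: field_simps)
  finally have eq: "(z - Wc z n) - (x - Wc x n) = \<i> * of_real \<epsilon> * (1 + P / ((z - d) * (x - d)))"
    unfolding zx by (simp add: algebra_simps)
  have Pn: "cmod P = (cmod (V n$2$1))\<^sup>2" unfolding P_def V12V21 norm_of_real by simp
  have "cmod (1 + P / ((z - d) * (x - d))) \<le> 1 + cmod P / (cmod (z - d) * cmod (x - d))"
    using norm_triangle_ineq[of 1 "P / ((z - d) * (x - d))"] by (simp add: norm_divide norm_mult)
  also have "\<dots> \<le> 1 + cmod P / (cmod (x - d))\<^sup>2"
  proof -
    have "cmod (x - d) * cmod (x - d) \<le> cmod (z - d) * cmod (x - d)"
      using le by (simp add: mult_right_mono)
    moreover have "0 < cmod (x - d) * cmod (x - d)" using xd0 by simp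
    ultimately have "cmod P / (cmod (z - d) * cmod (x - d)) \<le> cmod P / (cmod (x - d) * cmod (x - d))"
      by (intro divide_left_mono) auto
    then show ?thesis by (simp add: power2_eq_square)
  qed
  finally have "cmod (1 + P / ((z - d) * (x - d))) \<le> 1 + (cmod (V n$2$1))\<^sup>2 / (cmod (x - d))\<^sup>2"
    unfolding Pn .
  then have "\<epsilon> * cmod (1 + P / ((z - d) * (x - d))) \<le> \<epsilon> * (1 + (cmod (V n$2$1))\<^sup>2 / (cmod (x - d))\<^sup>2)"
    using e0 by (intro mult_left_mono) auto
  moreover have "cmod (\<i> * of_real \<epsilon> * (1 + P / ((z - d) * (x - d)))) = \<epsilon> * cmod (1 + P / ((z - d) * (x - d)))"
    using e0 by (simp add: norm_mult)
  ultimately show ?thesis using eq unfolding z_def x_def d_def by simp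
qed


definition wE :: "int \<Rightarrow> real" where
  "wE n = 1 + (cmod (V n$2$1))\<^sup>2 / (cmod (complex_of_real E - V n$2$2))\<^sup>2"

lemma wE_ge1: "1 \<le> wE n" unfolding wE_def by simp

lemma normE: assumes "solves V (complex_of_real E) u"
  shows "norm (u n) = sqrt (wE n) * cmod (u n$1)"
proof -
  have "(norm (u n))\<^sup>2 = (cmod (u n$1))\<^sup>2 * wE n" unfolding wE_def by (rule norm_sol[OF assms nzE])
  then have "norm (u n) = sqrt ((cmod (u n$1))\<^sup>2 * wE n)" by (metis norm_ge_zero real_sqrt_unique)
  then show ?thesis by (simp add: real_sqrt_mult mult.commute)
qed

lemma normz: assumes e0: "0 < \<epsilon>" and e\<delta>: "\<epsilon> < \<delta>" and s: "solves V (Complex E \<epsilon>) u"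
  shows "sqrt (wE n) * cmod (u n$1) \<le> 2 * norm (u n)"
proof -
  define c where "c = (cmod (V n$2$1))\<^sup>2"
  define dE where "dE = (cmod (complex_of_real E - V n$2$2))\<^sup>2"
  define dz where "dz = (cmod (Complex E \<epsilon> - V n$2$2))\<^sup>2"
  have nz: "Complex E \<epsilon> \<noteq> V n$2$2" using nz_of_Im[of "Complex E \<epsilon>" n] e0 by simp
  have dz0: "dz > 0" unfolding dz_def using nz by simp
  have dE0: "dE > 0" unfolding dE_def using nzE[of n] by simp
  have dzE: "dz \<le> 2 * dE" unfolding dz_def dE_def by (rule weight_facts(2)[OF e0 e\<delta>])
  have c0: "c \<ge> 0" unfolding c_def by simp
  have "c / dE = (2 * c) / (2 * dE)" by simp
  also have "\<dots> \<le> (2 * c) / dz" using dz0 dzE c0 by (intro divide_left_mono) auto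
  finally have cc: "c / dE \<le> 2 * (c / dz)" by simp
  have nn: "(norm (u n))\<^sup>2 = (cmod (u n$1))\<^sup>2 * (1 + c / dz)"
    unfolding c_def dz_def by (rule norm_sol[OF s nz])
  have "(sqrt (wE n) * cmod (u n$1))\<^sup>2 = wE n * (cmod (u n$1))\<^sup>2"
    using wE_ge1[of n] by (simp add: power_mult_distrib)
  also have "\<dots> \<le> (2 * (1 + c / dz)) * (cmod (u n$1))\<^sup>2"
  proof (rule mult_right_mono)
    show "wE n \<le> 2 * (1 + c / dz)" unfolding wE_def using cc unfolding c_def dE_def by simp
  qed simp
  also have "\<dots> = 2 * (norm (u n))\<^sup>2" unfolding nn by simp
  also have "\<dots> \<le> (2 * norm (u n))\<^sup>2" by (simp add: power2_eq_square)
  finally show ?thesis by (rule power2_le_imp_le) simp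
qed


lemma main_est:
  assumes e0: "0 < \<epsilon>" and e\<delta>: "\<epsilon> < \<delta>"
  defines "m \<equiv> mplus V (Complex E \<epsilon>)" and "A \<equiv> normL (u1 V E) (Leps V E \<epsilon>)"
    and "B \<equiv> normL (u2 V E) (Leps V E \<epsilon>)"
  shows "A > 0 \<and> B > 0 \<and> \<bar>B - cmod m * A\<bar> \<le> 6 * sqrt (cmod m * A * B)"
proof -
  define z where "z = Complex E \<epsilon>"
  define L where "L = Leps V E \<epsilon>"
  have Lp: "L > 1" and AB: "A * B = 1 / (4 * \<epsilon>)"
    using Leps_props[OF e0] unfolding L_def A_def B_def by auto
  have A0: "A \<ge> 0" "B \<ge> 0" unfolding A_def B_def normL_def
    by (intro real_sqrt_ge_zero add_nonneg_nonneg sum_nonneg mult_nonneg_nonneg; simp)+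
  have ABpos: "A > 0" "B > 0"
  proof -
    have "A * B > 0" using AB e0 by simp
    then show "A > 0" "B > 0" using A0 by (auto simp: zero_less_mult_iff)
  qed
  have Imz0: "Im z > 0" unfolding z_def using e0 by simp
  define u where "u = uplus V z"
  have us: "solves V z u" and usum: "summable (\<lambda>k::nat. (norm (u (int k)))\<^sup>2)"
    using uplus_props[OF Imz0] unfolding u_def by auto
  have a0: "u 0$1 \<noteq> 0" unfolding u_def by (rule uplus_a0[OF Imz0])
  define \<phi> where "\<phi> n = (1 / u 0$1) *s u n" for n
  have \<phi>s: "solves V z \<phi>" unfolding \<phi>_def by (rule solves_scale[OF us])
  have \<phi>0: "\<phi> 0$1 = 1" unfolding \<phi>_def using a0 by simp
  have \<phi>1: "\<phi> 1$1 = - m" unfolding \<phi>_def m_def mplus_def u_def z_def by simp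
  have \<phi>sum: "summable (\<lambda>k::nat. (norm (\<phi> (int k)))\<^sup>2)"
    unfolding \<phi>_def norm_smult2 power_mult_distrib by (rule summable_mult[OF usum])
  have gb: "\<epsilon> * (\<Sum>n=1..N. (norm (\<phi> (int n)))\<^sup>2) \<le> cmod m" for N
  proof -
    have "Im z * (\<Sum>n=1..N. (norm (\<phi> (int n)))\<^sup>2) \<le> - Im (\<phi> 1$1 * cnj (\<phi> 0$1))"
      by (rule green_bound[OF \<phi>s Imz0 \<phi>sum])
    also have "\<dots> = Im m" using \<phi>0 \<phi>1 by simp
    also have "\<dots> \<le> cmod m" using abs_Im_le_cmod[of m] by linarith
    finally show ?thesis unfolding z_def by simp
  qed
  define Pm where "Pm = sqrt (cmod m / \<epsilon>)"
  have Pm_bound: "L2_set (\<lambda>n. norm (\<phi> (int n))) {1..N} \<le> Pm" for N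
    unfolding Pm_def
  proof (rule L2_set_le_sum_sq)
    show "(\<Sum>i\<in>{1..N}. (norm (\<phi> (int i)))\<^sup>2) \<le> cmod m / \<epsilon>"
      using gb[of N] e0 by (simp add: pos_le_divide_eq mult.commute)
  qed simp
  define N where "N = nat \<lfloor>L\<rfloor>"
  have NL: "nat \<lfloor>L\<rfloor> + 1 \<le> N + 1" unfolding N_def by simp
  have L1: "L \<ge> 1" using Lp by simp
  have NleL: "real N \<le> L" unfolding N_def using L1 by linarith
  have wtN: "wt L n = 1" if "n \<le> N" for n
    unfolding wt_def clamp_def using that NleL by simp
  define \<omega> where "\<omega> n = sqrt (wt L n)" for n
  have \<omega>0: "0 \<le> \<omega> n" "\<omega> n \<le> 1" for n unfolding \<omega>_def using wt_nonneg wt_le1 by auto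
  define \<alpha>1 where "\<alpha>1 k = u1 V E (int k)$1" for k
  define \<alpha>2 where "\<alpha>2 k = u2 V E (int k)$1" for k
  define ph where "ph k = \<phi> (int k)$1" for k
  define sw where "sw n = sqrt (wE (int n))" for n
  have sw0: "sw n \<ge> 0" for n unfolding sw_def using wE_ge1[of "int n"] by simp
  have swsq: "wE (int n) = sw n * sw n" for n unfolding sw_def using wE_ge1[of "int n"] by simp
  have u1s: "solves V (complex_of_real E) (u1 V E)" using u1_props by simp
  have u2s: "solves V (complex_of_real E) (u2 V E)" using u2_props by simp
  have n\<alpha>1: "norm (u1 V E (int n)) = sw n * cmod (\<alpha>1 n)" for n
    unfolding \<alpha>1_def sw_def by (rule normE[OF u1s])
  have n\<alpha>2: "norm (u2 V E (int n)) = sw n * cmod (\<alpha>2 n)" for n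
    unfolding \<alpha>2_def sw_def by (rule normE[OF u2s])
  have Arep: "A = L2_set (\<lambda>n. \<omega> n * (sw n * cmod (\<alpha>1 n))) {1..N+1}"
    unfolding A_def L_def[symmetric] normL_L2[OF L1 NL] \<omega>_def n\<alpha>1 ..
  have Brep: "B = L2_set (\<lambda>n. \<omega> n * (sw n * cmod (\<alpha>2 n))) {1..N+1}"
    unfolding B_def L_def[symmetric] normL_L2[OF L1 NL] \<omega>_def n\<alpha>2 ..
  have sub: "L2_set (\<lambda>n. sw n * cmod (\<alpha> n)) {1..N} \<le> L2_set (\<lambda>n. \<omega> n * (sw n * cmod (\<alpha> n))) {1..N+1}" for \<alpha>
  proof -
    have "L2_set (\<lambda>n. sw n * cmod (\<alpha> n)) {1..N} = L2_set (\<lambda>n. \<omega> n * (sw n * cmod (\<alpha> n))) {1..N}"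
      by (rule L2_set_cong) (auto simp: \<omega>_def wtN)
    also have "\<dots> \<le> L2_set (\<lambda>n. \<omega> n * (sw n * cmod (\<alpha> n))) {1..N+1}"
      by (rule L2_set_subset) auto
    finally show ?thesis .
  qed
  have Asub: "L2_set (\<lambda>n. sw n * cmod (\<alpha>1 n)) {1..N} \<le> A" unfolding Arep by (rule sub)
  have Bsub: "L2_set (\<lambda>n. sw n * cmod (\<alpha>2 n)) {1..N} \<le> B" unfolding Brep by (rule sub)
  define g where "g j = (z - Wc z (int j)) - (complex_of_real E - Wc (complex_of_real E) (int j))" for j :: nat
  define f where "f j = g j * ph j" for j
  define T where "T k = complex_of_real E - Wc (complex_of_real E) (int (Suc k))" for k
  have gb2: "cmod (g j) \<le> \<epsilon> * wE (int j)" for j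
    unfolding g_def z_def wE_def by (rule g_bound[OF e0 e\<delta>])
  have nzz: "\<And>n. z \<noteq> V n$2$2" using nz_of_Im Imz0 by simp
  have \<Delta>: "ph (Suc k) - (\<alpha>2 (Suc k) - m * \<alpha>1 (Suc k))
       = \<alpha>1 (Suc k) * (\<Sum>j=1..k. \<alpha>2 j * f j) - \<alpha>2 (Suc k) * (\<Sum>j=1..k. \<alpha>1 j * f j)" for k
  proof (rule voc[where T=T])
    show "\<alpha>1 (Suc k) * \<alpha>2 k - \<alpha>1 k * \<alpha>2 (Suc k) = 1" for k unfolding \<alpha>1_def \<alpha>2_def by (rule wronsk)
    show "\<alpha>1 (Suc (Suc k)) = T k * \<alpha>1 (Suc k) - \<alpha>1 k" for k
      unfolding \<alpha>1_def T_def by (rule rec_nat[OF u1s nzE])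
    show "\<alpha>2 (Suc (Suc k)) = T k * \<alpha>2 (Suc k) - \<alpha>2 k" for k
      unfolding \<alpha>2_def T_def by (rule rec_nat[OF u2s nzE])
    show "ph (Suc (Suc k)) = T k * ph (Suc k) - ph k + f (Suc k)" for k
      using rec_nat[OF \<phi>s nzz, of k] unfolding ph_def T_def f_def g_def by (simp add: algebra_simps)
    show "ph 0 = 1" "ph 1 = - m" using \<phi>0 \<phi>1 unfolding ph_def by simp_all
    show "\<alpha>1 0 = 0" "\<alpha>1 1 = 1" "\<alpha>2 0 = 1" "\<alpha>2 1 = 0"
      using u1_props u2_props unfolding \<alpha>1_def \<alpha>2_def by simp_all
  qed
  have phw: "sw n * cmod (ph n) \<le> 2 * norm (\<phi> (int n))" for n
    unfolding ph_def sw_def by (rule normz[OF e0 e\<delta> \<phi>s[unfolded z_def]])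
  have phL2: "L2_set (\<lambda>n. sw n * cmod (ph n)) {1..N} \<le> 2 * Pm"
  proof -
    have "L2_set (\<lambda>n. sw n * cmod (ph n)) {1..N} \<le> L2_set (\<lambda>n. 2 * norm (\<phi> (int n))) {1..N}"
      by (rule L2_set_mono) (auto simp: phw sw0)
    also have "\<dots> = 2 * L2_set (\<lambda>n. norm (\<phi> (int n))) {1..N}" by (simp add: L2_set_right_distrib)
    also have "\<dots> \<le> 2 * Pm" using Pm_bound[of N] by simp
    finally show ?thesis .
  qed
  have Sb: "cmod (\<Sum>j=1..k. \<alpha> j * f j) \<le> 2 * \<epsilon> * X * Pm"
    if k: "k \<le> N" and X: "L2_set (\<lambda>n. sw n * cmod (\<alpha> n)) {1..N} \<le> X" for k \<alpha> X
  proof -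
    have hterm: "cmod (\<alpha> j * f j) \<le> \<epsilon> * (\<bar>sw j * cmod (\<alpha> j)\<bar> * \<bar>sw j * cmod (ph j)\<bar>)" for j
    proof -
      have "cmod (\<alpha> j * f j) = cmod (\<alpha> j) * cmod (g j) * cmod (ph j)" unfolding f_def by (simp add: norm_mult)
      also have "\<dots> \<le> cmod (\<alpha> j) * (\<epsilon> * wE (int j)) * cmod (ph j)"
        using gb2[of j] by (intro mult_right_mono mult_left_mono) auto
      also have "\<dots> = \<epsilon> * ((sw j * cmod (\<alpha> j)) * (sw j * cmod (ph j)))"
        unfolding swsq by (simp add: algebra_simps)
      also have "\<dots> = \<epsilon> * (\<bar>sw j * cmod (\<alpha> j)\<bar> * \<bar>sw j * cmod (ph j)\<bar>)" using sw0[of j] by simp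
      finally show ?thesis .
    qed
    have "cmod (\<Sum>j=1..k. \<alpha> j * f j) \<le> (\<Sum>j=1..k. cmod (\<alpha> j * f j))" by (rule norm_sum)
    also have "\<dots> \<le> (\<Sum>j=1..k. \<epsilon> * (\<bar>sw j * cmod (\<alpha> j)\<bar> * \<bar>sw j * cmod (ph j)\<bar>))"
      by (rule sum_mono) (rule hterm)
    also have "\<dots> \<le> (\<Sum>j=1..N. \<epsilon> * (\<bar>sw j * cmod (\<alpha> j)\<bar> * \<bar>sw j * cmod (ph j)\<bar>))"
      by (rule sum_mono2) (use k e0 in auto)
    also have "\<dots> = \<epsilon> * (\<Sum>j=1..N. \<bar>sw j * cmod (\<alpha> j)\<bar> * \<bar>sw j * cmod (ph j)\<bar>)"
      by (simp add: sum_distrib_left)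
    also have "\<dots> \<le> \<epsilon> * (L2_set (\<lambda>j. sw j * cmod (\<alpha> j)) {1..N} * L2_set (\<lambda>j. sw j * cmod (ph j)) {1..N})"
      using e0 by (intro mult_left_mono L2_set_mult_ineq) auto
    also have "\<dots> \<le> \<epsilon> * (X * (2 * Pm))"
      using e0 X phL2 order_trans[OF L2_set_nonneg X] by (intro mult_left_mono mult_mono) auto
    finally show ?thesis by (simp add: algebra_simps)
  qed
  define H where "H = L2_set (\<lambda>n. \<omega> n * (sw n * cmod (\<alpha>2 n - m * \<alpha>1 n))) {1..N+1}"
  have Pm0: "Pm \<ge> 0" unfolding Pm_def using e0 by simp
  have Hb: "H \<le> 3 * Pm"
  proof -
    define c1 where "c1 = 2 * \<epsilon> * B * Pm"
    define c2 where "c2 = 2 * \<epsilon> * A * Pm"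
    have c0: "c1 \<ge> 0" "c2 \<ge> 0" unfolding c1_def c2_def using e0 A0 Pm0 by simp_all
    have pt: "\<omega> n * (sw n * cmod (\<alpha>2 n - m * \<alpha>1 n))
        \<le> \<omega> n * (2 * norm (\<phi> (int n))) + c1 * (\<omega> n * (sw n * cmod (\<alpha>1 n))) + c2 * (\<omega> n * (sw n * cmod (\<alpha>2 n)))"
      if n: "n \<in> {1..N+1}" for n
    proof -
      obtain k where k: "n = Suc k" "k \<le> N" using n by (cases n) auto
      define S1 where "S1 = (\<Sum>j=1..k. \<alpha>1 j * f j)"
      define S2 where "S2 = (\<Sum>j=1..k. \<alpha>2 j * f j)"
      have e: "\<alpha>2 n - m * \<alpha>1 n = ph n - (\<alpha>1 n * S2 - \<alpha>2 n * S1)"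
        using \<Delta>[of k] unfolding S1_def S2_def k(1) by (simp add: algebra_simps)
      have "cmod (\<alpha>2 n - m * \<alpha>1 n) \<le> cmod (ph n) + (cmod (\<alpha>1 n) * cmod S2 + cmod (\<alpha>2 n) * cmod S1)"
      proof -
        have h1: "cmod (ph n - (\<alpha>1 n * S2 - \<alpha>2 n * S1)) \<le> cmod (ph n) + cmod (\<alpha>1 n * S2 - \<alpha>2 n * S1)"
          by (rule norm_triangle_ineq4)
        have h2: "cmod (\<alpha>1 n * S2 - \<alpha>2 n * S1) \<le> cmod (\<alpha>1 n) * cmod S2 + cmod (\<alpha>2 n) * cmod S1"
          using norm_triangle_ineq4[of "\<alpha>1 n * S2" "\<alpha>2 n * S1"] by (simp add: norm_mult)
        show ?thesis unfolding e using h1 h2 by linarith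
      qed
      also have "\<dots> \<le> cmod (ph n) + (cmod (\<alpha>1 n) * (2 * \<epsilon> * B * Pm) + cmod (\<alpha>2 n) * (2 * \<epsilon> * A * Pm))"
        using Sb[OF k(2) Bsub] Sb[OF k(2) Asub] unfolding S1_def S2_def
        by (intro add_mono mult_left_mono order_refl) auto
      finally have "sw n * cmod (\<alpha>2 n - m * \<alpha>1 n) \<le> sw n * (cmod (ph n) + (cmod (\<alpha>1 n) * c1 + cmod (\<alpha>2 n) * c2))"
        unfolding c1_def c2_def using sw0[of n] by (intro mult_left_mono) auto
      also have "\<dots> = sw n * cmod (ph n) + c1 * (sw n * cmod (\<alpha>1 n)) + c2 * (sw n * cmod (\<alpha>2 n))"
        by (simp add: algebra_simps)
      also have "\<dots> \<le> 2 * norm (\<phi> (int n)) + c1 * (sw n * cmod (\<alpha>1 n)) + c2 * (sw n * cmod (\<alpha>2 n))"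
        using phw[of n] by simp
      finally have "sw n * cmod (\<alpha>2 n - m * \<alpha>1 n) \<le> 2 * norm (\<phi> (int n)) + c1 * (sw n * cmod (\<alpha>1 n)) + c2 * (sw n * cmod (\<alpha>2 n))" .
      then have "\<omega> n * (sw n * cmod (\<alpha>2 n - m * \<alpha>1 n)) \<le> \<omega> n * (2 * norm (\<phi> (int n)) + c1 * (sw n * cmod (\<alpha>1 n)) + c2 * (sw n * cmod (\<alpha>2 n)))"
        using \<omega>0 by (intro mult_left_mono) auto
      then show ?thesis by (simp add: algebra_simps)
    qed
    have "H \<le> L2_set (\<lambda>n. \<omega> n * (2 * norm (\<phi> (int n))) + c1 * (\<omega> n * (sw n * cmod (\<alpha>1 n))) + c2 * (\<omega> n * (sw n * cmod (\<alpha>2 n)))) {1..N+1}"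
      unfolding H_def by (rule L2_set_mono) (use pt \<omega>0 sw0 in auto)
    also have "\<dots> \<le> L2_set (\<lambda>n. \<omega> n * (2 * norm (\<phi> (int n)))) {1..N+1} + L2_set (\<lambda>n. c1 * (\<omega> n * (sw n * cmod (\<alpha>1 n)))) {1..N+1} + L2_set (\<lambda>n. c2 * (\<omega> n * (sw n * cmod (\<alpha>2 n)))) {1..N+1}"
      by (rule L2_set_triangle3)
    also have "\<dots> = L2_set (\<lambda>n. \<omega> n * (2 * norm (\<phi> (int n)))) {1..N+1} + c1 * A + c2 * B"
      unfolding Arep Brep using c0 by (simp add: L2_set_right_distrib)
    also have "\<dots> \<le> 2 * Pm + c1 * A + c2 * B"
    proof -
      have "L2_set (\<lambda>n. \<omega> n * (2 * norm (\<phi> (int n)))) {1..N+1} \<le> L2_set (\<lambda>n. 2 * norm (\<phi> (int n))) {1..N+1}"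
        by (rule L2_set_mono) (use \<omega>0 in \<open>auto intro: mult_left_le_one_le\<close>)
      also have "\<dots> = 2 * L2_set (\<lambda>n. norm (\<phi> (int n))) {1..N+1}" by (simp add: L2_set_right_distrib)
      also have "\<dots> \<le> 2 * Pm" using Pm_bound[of "N+1"] by simp
      finally show ?thesis by simp
    qed
    finally have Hle: "H \<le> 2 * Pm + c1 * A + c2 * B" .
    have cc: "c1 * A + c2 * B = Pm"
    proof -
      have "c1 * A + c2 * B = 4 * \<epsilon> * (A * B) * Pm" unfolding c1_def c2_def by (simp add: algebra_simps)
      also have "\<dots> = Pm" unfolding AB using e0 by simp
      finally show ?thesis .
    qed
    show ?thesis using Hle cc by linarith
  qed
  have t1: "B \<le> H + cmod m * A"
  proof -
    have "B \<le> L2_set (\<lambda>n. \<omega> n * (sw n * cmod (\<alpha>2 n - m * \<alpha>1 n)) + cmod m * (\<omega> n * (sw n * cmod (\<alpha>1 n)))) {1..N+1}"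
      unfolding Brep
    proof (rule L2_set_mono)
      fix n
      have "cmod (\<alpha>2 n) \<le> cmod (\<alpha>2 n - m * \<alpha>1 n) + cmod m * cmod (\<alpha>1 n)"
        using norm_triangle_sub[of "\<alpha>2 n" "m * \<alpha>1 n"] by (simp add: norm_mult)
      then have "\<omega> n * sw n * cmod (\<alpha>2 n) \<le> \<omega> n * sw n * (cmod (\<alpha>2 n - m * \<alpha>1 n) + cmod m * cmod (\<alpha>1 n))"
        using \<omega>0 sw0 by (intro mult_left_mono) auto
      then show "\<omega> n * (sw n * cmod (\<alpha>2 n)) \<le> \<omega> n * (sw n * cmod (\<alpha>2 n - m * \<alpha>1 n)) + cmod m * (\<omega> n * (sw n * cmod (\<alpha>1 n)))"
        by (simp add: algebra_simps)
      show "0 \<le> \<omega> n * (sw n * cmod (\<alpha>2 n))" using \<omega>0 sw0 by simp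
    qed
    also have "\<dots> \<le> H + L2_set (\<lambda>n. cmod m * (\<omega> n * (sw n * cmod (\<alpha>1 n)))) {1..N+1}"
      unfolding H_def by (rule L2_set_triangle_ineq)
    also have "\<dots> = H + cmod m * A" unfolding Arep by (simp add: L2_set_right_distrib)
    finally show ?thesis .
  qed
  have t2: "cmod m * A \<le> H + B"
  proof -
    have "cmod m * A = L2_set (\<lambda>n. cmod m * (\<omega> n * (sw n * cmod (\<alpha>1 n)))) {1..N+1}"
      unfolding Arep by (simp add: L2_set_right_distrib)
    also have "\<dots> \<le> L2_set (\<lambda>n. \<omega> n * (sw n * cmod (\<alpha>2 n - m * \<alpha>1 n)) + \<omega> n * (sw n * cmod (\<alpha>2 n))) {1..N+1}"
    proof (rule L2_set_mono)
      fix n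
      have "cmod m * cmod (\<alpha>1 n) \<le> cmod (\<alpha>2 n - m * \<alpha>1 n) + cmod (\<alpha>2 n)"
      proof -
        have "m * \<alpha>1 n = \<alpha>2 n - (\<alpha>2 n - m * \<alpha>1 n)" by simp
        then have "cmod (m * \<alpha>1 n) \<le> cmod (\<alpha>2 n) + cmod (\<alpha>2 n - m * \<alpha>1 n)"
          by (metis norm_triangle_ineq4)
        then show ?thesis by (simp add: norm_mult)
      qed
      then have "\<omega> n * sw n * (cmod m * cmod (\<alpha>1 n)) \<le> \<omega> n * sw n * (cmod (\<alpha>2 n - m * \<alpha>1 n) + cmod (\<alpha>2 n))"
        using \<omega>0 sw0 by (intro mult_left_mono) auto
      then show "cmod m * (\<omega> n * (sw n * cmod (\<alpha>1 n))) \<le> \<omega> n * (sw n * cmod (\<alpha>2 n - m * \<alpha>1 n)) + \<omega> n * (sw n * cmod (\<alpha>2 n))"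
        by (simp add: algebra_simps)
      show "0 \<le> cmod m * (\<omega> n * (sw n * cmod (\<alpha>1 n)))" using \<omega>0 sw0 by simp
    qed
    also have "\<dots> \<le> H + B" unfolding H_def Brep by (rule L2_set_triangle_ineq)
    finally show ?thesis .
  qed
  have "Pm = 2 * sqrt (cmod m * A * B)"
  proof -
    have "cmod m / \<epsilon> = 4 * (cmod m * A * B)" using AB e0 by (simp add: field_simps)
    then show ?thesis unfolding Pm_def by (simp add: real_sqrt_mult)
  qed
  then have "\<bar>B - cmod m * A\<bar> \<le> 6 * sqrt (cmod m * A * B)" using t1 t2 Hb by linarith
  then show ?thesis using ABpos by simp
qed

end

theorem theorem6p7:
  fixes V :: "int \<Rightarrow> complex^2^2" and \<delta> E :: real
  assumes "bounded (range V)"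
    and "\<And>n. self_adjoint_mat (V n)"
    and "\<delta> > 0"
    and "E \<in> Tdelta V \<delta>"
  shows "\<exists>C1 C2. 0 < C1 \<and> C1 < C2 \<and>
    (\<forall>\<epsilon>. 0 < \<epsilon> \<and> \<epsilon> < \<delta> \<longrightarrow>
      C1 / cmod (mplus V (Complex E \<epsilon>))
        < normL (u1 V E) (Leps V E \<epsilon>) / normL (u2 V E) (Leps V E \<epsilon>) \<and>
      normL (u1 V E) (Leps V E \<epsilon>) / normL (u2 V E) (Leps V E \<epsilon>)
        < C2 / cmod (mplus V (Complex E \<epsilon>)))"
proof -
  interpret SA V using assms(2) by unfold_locales
  have gap: "\<delta> \<le> cmod (complex_of_real E - V n$2$2)" for n
  proof -
    have "\<delta> \<le> infdist (complex_of_real E) (range (\<lambda>n. V n $ 2 $ 2))"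
      using assms(4) unfolding Tdelta_def by simp
    also have "\<dots> \<le> dist (complex_of_real E) (V n$2$2)" by (rule infdist_le) simp
    finally show ?thesis by (simp add: dist_norm)
  qed
  interpret SAE V E \<delta> by unfold_locales (use assms(3) gap in auto)
  have key: "\<forall>\<epsilon>. 0 < \<epsilon> \<and> \<epsilon> < \<delta> \<longrightarrow>
      (1/64) / cmod (mplus V (Complex E \<epsilon>))
        < normL (u1 V E) (Leps V E \<epsilon>) / normL (u2 V E) (Leps V E \<epsilon>) \<and>
      normL (u1 V E) (Leps V E \<epsilon>) / normL (u2 V E) (Leps V E \<epsilon>)
        < 64 / cmod (mplus V (Complex E \<epsilon>))"
  proof (intro allI impI)
    fix \<epsilon> :: real assume e: "0 < \<epsilon> \<and> \<epsilon> < \<delta>"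
    have h: "normL (u1 V E) (Leps V E \<epsilon>) > 0 \<and> normL (u2 V E) (Leps V E \<epsilon>) > 0 \<and>
      \<bar>normL (u2 V E) (Leps V E \<epsilon>) - cmod (mplus V (Complex E \<epsilon>)) * normL (u1 V E) (Leps V E \<epsilon>)\<bar>
        \<le> 6 * sqrt (cmod (mplus V (Complex E \<epsilon>)) * normL (u1 V E) (Leps V E \<epsilon>) * normL (u2 V E) (Leps V E \<epsilon>))"
      using main_est[of \<epsilon>] e by simp
    have "cmod (mplus V (Complex E \<epsilon>)) > 0 \<and> (1/64) / cmod (mplus V (Complex E \<epsilon>)) < normL (u1 V E) (Leps V E \<epsilon>) / normL (u2 V E) (Leps V E \<epsilon>)
      \<and> normL (u1 V E) (Leps V E \<epsilon>) / normL (u2 V E) (Leps V E \<epsilon>) < 64 / cmod (mplus V (Complex E \<epsilon>))"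
      using h by (intro final_alg) auto
    then show "(1/64) / cmod (mplus V (Complex E \<epsilon>)) < normL (u1 V E) (Leps V E \<epsilon>) / normL (u2 V E) (Leps V E \<epsilon>) \<and>
      normL (u1 V E) (Leps V E \<epsilon>) / normL (u2 V E) (Leps V E \<epsilon>) < 64 / cmod (mplus V (Complex E \<epsilon>))"
      by auto
  qed
  have "0 < (1/64::real) \<and> (1/64::real) < 64" by simp
  then show ?thesis using key by blast
qed

end
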